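(* Let $G$ be a cyclic group of odd order which is not a prime power. Then the power graph $\mathscr{G}(G)$ is not overfull.
   Context: For a finite group $G$, the power graph $\mathscr{G}(G)$ is the simple graph with vertex set the elements of $G$, in which two distinct elements $a,b$ are adjacent if and only if one is a power of the other. For a finite simple graph $\Gamma$ on $n$ vertices with maximum vertex degree $\Delta(\Gamma)$, $\Gamma$ is called overfull if $|E(\Gamma)| / \lfloor n/2 \rfloor > \Delta(\Gamma)$. *)

theory Defs
  imports "HOL-Algebra.Algebra" "HOL-Number_Theory.Number_Theory"
begin

definition power_graph_adj :: "('a, 'b) monoid_scheme \<Rightarrow> 'a \<Rightarrow> 'a \<Rightarrow> bool" where
  "power_graph_adj G a b \<longleftrightarrow> a \<in> carrier G \<and> b \<in> carrier G \<and> a \<noteq> b \<and>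
     ((\<exists>k::nat. b = a [^]\<^bsub>G\<^esub> k) \<or> (\<exists>k::nat. a = b [^]\<^bsub>G\<^esub> k))"

definition power_graph_edges :: "('a, 'b) monoid_scheme \<Rightarrow> 'a set set" where
  "power_graph_edges G = {{a, b} | a b. power_graph_adj G a b}"

definition power_graph_degree :: "('a, 'b) monoid_scheme \<Rightarrow> 'a \<Rightarrow> nat" where
  "power_graph_degree G a = card {b. power_graph_adj G a b}"

definition power_graph_max_degree :: "('a, 'b) monoid_scheme \<Rightarrow> nat" where
  "power_graph_max_degree G = Max (power_graph_degree G ` carrier G)"

definition power_graph_overfull :: "('a, 'b) monoid_scheme \<Rightarrow> bool" where
  "power_graph_overfull G \<longleftrightarrow>
     real (card (power_graph_edges G)) / real (card (carrier G) div 2)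
       > real (power_graph_max_degree G)"

end

theory Submission
  imports Defs
begin

lemma split_not_primepow:
  fixes n :: nat
  assumes "n > 1" "\<not> primepow n"
  shows "\<exists>x y. n = x * y \<and> coprime x y \<and> 1 < x \<and> 1 < y"
proof -
  obtain p where p: "Factorial_Ring.prime p" "p dvd n" using assms(1) prime_factor_nat by (metis less_irrefl)
  define k where "k = multiplicity p n"
  obtain y where y: "n = p ^ k * y" "\<not> p dvd y"
    using multiplicity_decompose'[of n p] k_def assms(1) p(1) not_prime_unit
    by (metis not_one_less_zero)
  have k0: "k > 0" using p assms(1) k_def
    by (simp add: prime_multiplicity_gt_zero_iff)
  have y0: "y \<noteq> 0" using y assms(1) by (metis mult_0_right not_one_less_zero)
  have y1: "y \<noteq> 1"
  proof
    assume "y = 1"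
    then have "primepow n" using y p k0 unfolding primepow_def by auto
    then show False using assms(2) by simp
  qed
  have "coprime p y" using p y(2) by (simp add: prime_imp_coprime)
  then have "coprime (p ^ k) y" by simp
  moreover have "1 < p ^ k" using p k0
    by (metis one_less_power prime_gt_1_nat)
  ultimately show ?thesis using y y0 y1 by (intro exI[of _ "p^k"] exI[of _ y]) auto
qed

lemma edges_bound:
  fixes V :: "'a set" and E :: "'a set set"
  assumes "finite V" "E \<subseteq> {S. S \<subseteq> V \<and> card S = 2}" "A \<subseteq> V" "B \<subseteq> V"
    and "\<And>a b. a \<in> A \<Longrightarrow> b \<in> B \<Longrightarrow> a \<noteq> b \<and> {a, b} \<notin> E"
  shows "card E + card A * card B \<le> card V choose 2"
proof -
  define AB where "AB = (\<lambda>(a,b). {a,b}) ` (A \<times> B)"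
  have inj: "inj_on (\<lambda>(a,b). {a,b}) (A \<times> B)"
  proof (rule inj_onI, clarify)
    fix a b a' b' assume h: "a \<in> A" "b \<in> B" "a' \<in> A" "b' \<in> B" "{a, b} = {a', b'}"
    then have "a \<noteq> b'" "a' \<noteq> b" using assms(5) by blast+
    then show "a = a' \<and> b = b'" using h(5) by (metis doubleton_eq_iff)
  qed
  have fA: "finite A" "finite B" using assms(1,3,4) finite_subset by blast+
  have cAB: "card AB = card A * card B"
    unfolding AB_def using card_image[OF inj] by (simp add: card_cartesian_product)
  have sub: "E \<union> AB \<subseteq> {S. S \<subseteq> V \<and> card S = 2}"
    using assms(2-5) unfolding AB_def by auto
  have disj: "E \<inter> AB = {}" using assms(5) unfolding AB_def by auto
  have fin: "finite {S. S \<subseteq> V \<and> card S = 2}" using assms(1) by simp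
  have "card E + card AB = card (E \<union> AB)"
    using disj fin sub by (metis card_Un_disjoint finite_subset le_sup_iff)
  also have "\<dots> \<le> card {S. S \<subseteq> V \<and> card S = 2}"
    using card_mono[OF fin sub] .
  also have "\<dots> = card V choose 2" using n_subsets[OF assms(1)] by simp
  finally show ?thesis using cAB by simp
qed

lemma (in group) pow_nat_eq_iff:
  assumes "g \<in> carrier G"
  shows "(g [^] (a::nat) = g [^] (b::nat)) \<longleftrightarrow> int (ord g) dvd int b - int a"
  using int_pow_eq[OF assms, of "int a" "int b"] by (simp add: int_pow_int)

lemma nd_aux:
  fixes x y t s k :: nat
  assumes "coprime x y" "0 < t" "t < y" "int (x*y) dvd int (y*s*k) - int (x*t)"
  shows False
proof -
  have d1: "int y dvd int (y*s*k) - int (x*t)"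
    using assms(4) by (metis dvd_mult_right of_nat_mult)
  have d2: "int y dvd int (y*s*k)" by simp
  from dvd_diff[OF d2 d1] have "int y dvd int (y*s*k) - (int (y*s*k) - int (x*t))" .
  then have "int y dvd int (x*t)" by simp
  then have "y dvd x*t" by (simp only: int_dvd_int_iff)
  then have "y dvd t" using assms(1) by (metis coprime_commute coprime_dvd_mult_right_iff)
  then show False using assms(2,3) by (simp add: nat_dvd_not_less)
qed

lemma inj_aux:
  fixes x y s s' :: nat
  assumes "0 < y" "s < x" "s' < x" "int (x*y) dvd int (y*s') - int (y*s)"
  shows "s = s'"
proof (rule ccontr)
  assume ne: "s \<noteq> s'"
  have "int x * int y dvd int y * (int s' - int s)"
    using assms(4) by (simp add: algebra_simps)
  then have d: "int x dvd int s' - int s" using assms(1) by (simp add: mult.commute)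
  have "int s' - int s \<noteq> 0" using ne by simp
  from dvd_imp_le_int[OF this d] have "\<bar>int x\<bar> \<le> \<bar>int s' - int s\<bar>" .
  then show False using assms(2,3) by linarith
qed

lemma (in group) main_aux:
  assumes "True"
    and "finite (carrier G)"
    and "cyclic_group G"
    and "odd (order G)"
    and "\<not> primepow (order G)"
  shows "\<not> power_graph_overfull G"
proof -
  define n where "n = order G"
  have ncard: "card (carrier G) = n" unfolding n_def order_def by simp
  obtain g where g: "g \<in> carrier G" "subgroup_generated G {g} = G"
    using assms(3) unfolding cyclic_group_def by blast
  have ordg: "ord g = n" using cyclic_order_is_ord[OF g(1)] g(2) n_def by simp
  define D where "D = power_graph_max_degree G"
  have adj1: "{b. power_graph_adj G \<one> b} = carrier G - {\<one>}"
    unfolding power_graph_adj_def by (auto intro: exI[of _ 0])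
  have degD: "n - 1 \<le> D"
  proof -
    have "power_graph_degree G \<one> = n - 1"
      unfolding power_graph_degree_def adj1 using ncard assms(2) by (simp add: card_Diff_singleton)
    moreover have "power_graph_degree G \<one> \<le> D"
      unfolding D_def power_graph_max_degree_def using assms(2) by (intro Max_ge) auto
    ultimately show ?thesis by simp
  qed
  have n0: "n > 0" using ncard assms(2) by (metis card_gt_0_iff one_closed empty_iff)
  show ?thesis
  proof (cases "n = 1")
    case True
    then show ?thesis unfolding power_graph_overfull_def using ncard by simp
  next
    case False
    then have n1: "n > 1" using n0 by simp
    obtain x y where xy: "n = x * y" "coprime x y" "1 < x" "1 < y"
      using split_not_primepow[OF n1] assms(5) n_def by blast
    have ox: "odd x" "odd y" using xy(1) assms(4) n_def by auto
    have x3: "x \<ge> 3" using ox(1) xy(3) by presburger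
    have y3: "y \<ge> 3" using ox(2) xy(4) by presburger
    define A where "A = (\<lambda>s. g [^] (y*s)) ` {1..<x}"
    define B where "B = (\<lambda>t. g [^] (x*t)) ` {1..<y}"
    have key: "g [^] (x*t) \<noteq> (g [^] (y*s)) [^] k \<and> g [^] (y*s) \<noteq> (g [^] (x*t)) [^] k"
      if "s \<in> {1..<x}" "t \<in> {1..<y}" for s t k :: nat
    proof
      show "g [^] (x*t) \<noteq> (g [^] (y*s)) [^] k"
      proof
        assume "g [^] (x*t) = (g [^] (y*s)) [^] k"
        then have "g [^] (x*t) = g [^] (y*s*k)" using g(1) by (simp add: nat_pow_pow)
        then have "int (x*y) dvd int (y*s*k) - int (x*t)"
          using pow_nat_eq_iff[OF g(1)] ordg xy(1) by simp
        then show False using nd_aux[OF xy(2), of t s k] that by auto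
      qed
      show "g [^] (y*s) \<noteq> (g [^] (x*t)) [^] k"
      proof
        assume "g [^] (y*s) = (g [^] (x*t)) [^] k"
        then have "g [^] (y*s) = g [^] (x*t*k)" using g(1) by (simp add: nat_pow_pow)
        then have "int (y*x) dvd int (x*t*k) - int (y*s)"
          using pow_nat_eq_iff[OF g(1)] ordg xy(1) by (simp add: mult.commute)
        then show False using nd_aux[of y x s t k] xy(2) that by (auto simp: coprime_commute)
      qed
    qed
    have injA: "inj_on (\<lambda>s. g [^] (y*s)) {1..<x}"
    proof (rule inj_onI)
      fix s s' assume h: "s \<in> {1..<x}" "s' \<in> {1..<x}" "g [^] (y*s) = g [^] (y*s')"
      then have "int (x*y) dvd int (y*s') - int (y*s)"
        using pow_nat_eq_iff[OF g(1)] ordg xy(1) by simp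
      then show "s = s'" using inj_aux[of y s x s'] h xy by auto
    qed
    have injB: "inj_on (\<lambda>t. g [^] (x*t)) {1..<y}"
    proof (rule inj_onI)
      fix s s' assume h: "s \<in> {1..<y}" "s' \<in> {1..<y}" "g [^] (x*s) = g [^] (x*s')"
      then have "int (y*x) dvd int (x*s') - int (x*s)"
        using pow_nat_eq_iff[OF g(1)] ordg xy(1) by (simp add: mult.commute)
      then show "s = s'" using inj_aux[of x s y s'] h xy by auto
    qed
    have cA: "card A = x - 1" unfolding A_def using card_image[OF injA] by simp
    have cB: "card B = y - 1" unfolding B_def using card_image[OF injB] by simp
    define E where "E = power_graph_edges G"
    have Esub: "E \<subseteq> {S. S \<subseteq> carrier G \<and> card S = 2}"
      unfolding E_def power_graph_edges_def power_graph_adj_def by auto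
    have AV: "A \<subseteq> carrier G" "B \<subseteq> carrier G" unfolding A_def B_def using g(1) by auto
    have nonadj: "a \<noteq> b \<and> {a, b} \<notin> E" if aA: "a \<in> A" and bB: "b \<in> B" for a b
    proof -
      obtain s where s: "s \<in> {1..<x}" "a = g [^] (y*s)" using aA unfolding A_def by auto
      obtain t where t: "t \<in> {1..<y}" "b = g [^] (x*t)" using bB unfolding B_def by auto
      have k: "\<And>k::nat. b \<noteq> a [^] k \<and> a \<noteq> b [^] k" using key[OF s(1) t(1)] s(2) t(2) by simp
      have "a \<noteq> b" using k[of 1] s t g(1) by auto
      moreover have "{a, b} \<notin> E"
      proof
        assume "{a, b} \<in> E"
        then obtain a' b' where "{a, b} = {a', b'}" "power_graph_adj G a' b'"
          unfolding E_def power_graph_edges_def by blast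
        then have "power_graph_adj G a b \<or> power_graph_adj G b a"
          by (metis doubleton_eq_iff)
        then show False using k unfolding power_graph_adj_def by blast
      qed
      ultimately show ?thesis by blast
    qed
    have bound: "card E + card A * card B \<le> n choose 2"
      using edges_bound[OF assms(2) Esub AV nonadj] ncard by simp
    have ev: "even (n * (n - 1))" by (cases "even n") auto
    have ch: "2 * (n choose 2) = n * (n - 1)"
      using ev by (simp add: choose_two)
    define m where "m = n div 2"
    have m2: "n = 2 * m + 1" using assms(4) n_def m_def by presburger
    have mpos: "m > 0" using n1 m2 by simp
    have b2: "2 * card E + 2 * ((x - 1) * (y - 1)) \<le> n * (n - 1)"
      using bound ch unfolding cA cB by linarith
    have I1: "2 * int (card E) + 2 * ((int x - 1) * (int y - 1)) \<le> int n * (int n - 1)"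
    proof -
      have "int (2 * card E + 2 * ((x - 1) * (y - 1))) \<le> int (n * (n - 1))"
        using b2 by (simp only: of_nat_le_iff)
      then show ?thesis using x3 y3 n1 by (simp add: of_nat_diff)
    qed
    have p1: "1 * 1 \<le> (int x - 2) * (int y - 2)"
      by (rule mult_mono) (use x3 y3 in auto)
    have I2: "int n - 1 \<le> 2 * ((int x - 1) * (int y - 1))"
    proof -
      have "2 * ((int x - 1) * (int y - 1)) - (int x * int y - 1) = (int x - 2) * (int y - 2) - 1"
        by (simp add: algebra_simps)
      then show ?thesis using p1 xy(1) by simp
    qed
    have I3: "int n * (int n - 1) - (int n - 1) = (int n - 1) * (2 * int m)"
      using m2 by (simp add: algebra_simps)
    have "2 * int (card E) \<le> (int n - 1) * (2 * int m)" using I1 I2 I3 by linarith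
    then have "int (card E) \<le> (int n - 1) * int m" by (simp add: algebra_simps)
    then have "int (card E) \<le> int ((n - 1) * m)" using n1 by (simp add: of_nat_diff)
    then have cE: "card E \<le> (n - 1) * m" by (simp only: of_nat_le_iff)
    have "real (card E) / real (n div 2) \<le> real (n - 1)"
    proof -
      have "real (card E) \<le> real (n - 1) * real m" using cE by (metis of_nat_le_iff of_nat_mult)
      then show ?thesis using mpos m_def by (simp add: pos_divide_le_eq)
    qed
    also have "\<dots> \<le> real D" using degD by simp
    finally show ?thesis unfolding power_graph_overfull_def E_def D_def using ncard by simp
  qed
qed

theorem mainTheorem7:
  fixes G :: "('a, 'b) monoid_scheme"
  assumes "group G"
    and "finite (carrier G)"
    and "cyclic_group G"
    and "odd (order G)"
    and "\<not> primepow (order G)"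
  shows "\<not> power_graph_overfull G"
  using group.main_aux[OF assms(1) _ assms(2-5)] by simp

end
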